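(* Let $F=\mathbb{F}_q$ be a finite field of characteristic not $2$, let $K=\mathbb{F}_{q^2}$ be its quadratic extension, $\sigma$ the non-trivial automorphism of $K/F$, and $d\in K$ with $K=F(d)$ and $d^2\in F$. Let $a\in K\setminus F$, $f(t)=t^2-a\in K[t;\sigma]$, $S_f=(K/F,\sigma,a)$ the nonassociative quaternion algebra, and $L_f=S_f\setminus\{0\}$ its multiplicative loop. (i) If $a\ne\lambda d$ for all $\lambda\in F^\times$, then $\mathrm{Aut}(L_f)$ contains a subgroup isomorphic to the cyclic group $\mathbb{Z}/(q+1)\mathbb{Z}$; all automorphisms in this subgroup are inner and extend to automorphisms of $S_f$. (ii) If $a=\lambda d$ for some $\lambda\in F^\times$, then $\mathrm{Aut}(L_f)$ contains a subgroup isomorphic to the dicyclic group of order $2q+2$, all of whose elements extend to automorphisms of $S_f$.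
   Context: $K[t;\sigma]$ is the twisted polynomial ring with $tb=\sigma(b)t$ for $b\in K$. $(K/F,\sigma,a)=K[t;\sigma]/K[t;\sigma](t^2-a)$ is the set of polynomials $x_0+x_1t$ ($x_i\in K$) with multiplication $g\circ h=gh\bmod_r(t^2-a)$, the remainder of right division by $t^2-a$; for $a\in K\setminus F$ it is a proper semifield, and $L_f$ is the loop of its nonzero elements. An inner automorphism of $L_f$ is a loop automorphism of the form $x\mapsto (c_lx)c$ with $c_l$ the left inverse of $c$. The dicyclic group of order $4l$ is $\langle x,y\mid x^{2l}=1,\ y^2=x^l,\ y^{-1}xy=x^{-1}\rangle$. *)

theory Defs
  imports "HOL-Algebra.Elementary_Groups"
begin

(* Elements x0 + x1 t of S_f = (K/F, sigma, a) are represented as pairs (x0, x1) in K x K. *)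

(* Multiplication g o h = g h mod_r (t^2 - a) in K[t;sigma], written out:
   (x0 + x1 t)(y0 + y1 t) = x0 y0 + x1 sigma(y1) t^2 + (x0 y1 + x1 sigma(y0)) t,
   and t^2 = 1 (t^2 - a) + a, so the right remainder replaces t^2 by a. *)
definition nq_mult :: "('k::field \<Rightarrow> 'k) \<Rightarrow> 'k \<Rightarrow> 'k \<times> 'k \<Rightarrow> 'k \<times> 'k \<Rightarrow> 'k \<times> 'k" where
  "nq_mult \<sigma> a x y =
     (fst x * fst y + snd x * \<sigma> (snd y) * a, fst x * snd y + snd x * \<sigma> (fst y))"

definition loop_carrier :: "('k::field \<times> 'k) set" where
  "loop_carrier = UNIV - {(0, 0)}"

definition loop_aut :: "('k::field \<Rightarrow> 'k) \<Rightarrow> 'k \<Rightarrow> ('k \<times> 'k \<Rightarrow> 'k \<times> 'k) \<Rightarrow> bool" where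
  "loop_aut \<sigma> a \<phi> \<longleftrightarrow>
     bij_betw \<phi> loop_carrier loop_carrier \<and> \<phi> \<in> extensional loop_carrier \<and>
     (\<forall>x\<in>loop_carrier. \<forall>y\<in>loop_carrier. \<phi> (nq_mult \<sigma> a x y) = nq_mult \<sigma> a (\<phi> x) (\<phi> y))"

definition AutL :: "('k::field \<Rightarrow> 'k) \<Rightarrow> 'k \<Rightarrow> ('k \<times> 'k \<Rightarrow> 'k \<times> 'k) monoid" where
  "AutL \<sigma> a = \<lparr> carrier = {\<phi>. loop_aut \<sigma> a \<phi>},
                 mult = (\<lambda>\<phi> \<psi>. restrict (\<phi> \<circ> \<psi>) loop_carrier),
                 one = restrict id loop_carrier \<rparr>"

definition inner_aut :: "('k::field \<Rightarrow> 'k) \<Rightarrow> 'k \<Rightarrow> ('k \<times> 'k \<Rightarrow> 'k \<times> 'k) \<Rightarrow> bool" where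
  "inner_aut \<sigma> a \<phi> \<longleftrightarrow> loop_aut \<sigma> a \<phi> \<and>
     (\<exists>c\<in>loop_carrier. \<exists>cl\<in>loop_carrier. nq_mult \<sigma> a cl c = (1, 0) \<and>
        (\<forall>x\<in>loop_carrier. \<phi> x = nq_mult \<sigma> a (nq_mult \<sigma> a cl x) c))"

(* F-algebra automorphisms of S_f, F = fixed field of sigma *)
definition alg_aut :: "('k::field \<Rightarrow> 'k) \<Rightarrow> 'k \<Rightarrow> ('k \<times> 'k \<Rightarrow> 'k \<times> 'k) \<Rightarrow> bool" where
  "alg_aut \<sigma> a \<Phi> \<longleftrightarrow> bij \<Phi> \<and>
     (\<forall>x y. \<Phi> (fst x + fst y, snd x + snd y) = (fst (\<Phi> x) + fst (\<Phi> y), snd (\<Phi> x) + snd (\<Phi> y))) \<and>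
     (\<forall>l x. \<sigma> l = l \<longrightarrow> \<Phi> (l * fst x, l * snd x) = (l * fst (\<Phi> x), l * snd (\<Phi> x))) \<and>
     (\<forall>x y. \<Phi> (nq_mult \<sigma> a x y) = nq_mult \<sigma> a (\<Phi> x) (\<Phi> y))"

definition extends_to_alg_aut :: "('k::field \<Rightarrow> 'k) \<Rightarrow> 'k \<Rightarrow> ('k \<times> 'k \<Rightarrow> 'k \<times> 'k) \<Rightarrow> bool" where
  "extends_to_alg_aut \<sigma> a \<phi> \<longleftrightarrow> (\<exists>\<Phi>. alg_aut \<sigma> a \<Phi> \<and> (\<forall>x\<in>loop_carrier. \<Phi> x = \<phi> x))"

(* Dicyclic group of order 4l, concrete model: (k, e) stands for x^k y^e,
   k in {0..<2l}; relations x^(2l)=1, y^2 = x^l, y^-1 x y = x^-1. *)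
definition dicyclic_group :: "nat \<Rightarrow> (int \<times> bool) monoid" where
  "dicyclic_group l = \<lparr> carrier = {0..<2 * int l} \<times> UNIV,
     mult = (\<lambda>(a, e) (b, f).
        if \<not> e then ((a + b) mod (2 * int l), f)
        else if \<not> f then ((a - b) mod (2 * int l), True)
        else ((a - b + int l) mod (2 * int l), False)),
     one = (0, False) \<rparr>"

end

theory Submission
  imports Defs "HOL-Algebra.Multiplicative_Group"
begin

definition Rk :: "'k::field ring" where
  "Rk = \<lparr>carrier = UNIV, monoid.mult = (\<lambda>x y. x * y), one = 1, ring.zero = 0, add = (\<lambda>x y. x + y)\<rparr>"

lemma Rk_field: "Ring.field (Rk :: 'k::field ring)"
proof -
  have "\<exists>y. x + y = 0" for x :: 'k
    using add.right_inverse by blast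
  moreover have "x \<noteq> 0 \<Longrightarrow> \<exists>y. x * y = 1" for x :: 'k
    by (rule exI[of _ "inverse x"]) auto
  ultimately show ?thesis
    unfolding Rk_def using add.right_inverse
    by unfold_locales (auto simp:algebra_simps Units_def)
qed

lemma gen_exists: "\<exists>g::'k::{field,finite}. g \<noteq> 0 \<and> (\<forall>x. x \<noteq> 0 \<longrightarrow> (\<exists>i. x = g^i))"
proof -
  interpret R: Ring.field "Rk :: 'k ring" by (rule Rk_field)
  have pw: "x [^]\<^bsub>Rk\<^esub> (i::nat) = x ^ i" for x :: 'k and i
    by (induct i) (simp_all add: Rk_def mult.commute)
  have "finite (carrier (Rk :: 'k ring))" by simp
  from R.finite_field_mult_group_has_gen[OF this] obtain g where
    g: "g \<in> carrier (mult_of (Rk::'k ring))" "carrier (mult_of (Rk::'k ring)) = {g[^]\<^bsub>Rk\<^esub>i | i::nat . i \<in> UNIV}"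
    by (auto simp: nat_pow_mult_of)
  show ?thesis
  proof (rule exI[of _ g], intro conjI allI impI)
    show "g \<noteq> 0" using g(1) by (simp add: Rk_def)
    fix x :: 'k assume "x \<noteq> 0"
    then have "x \<in> carrier (mult_of (Rk::'k ring))" by (simp add: Rk_def)
    then show "\<exists>i. x = g^i" using g(2) pw by auto
  qed
qed

lemma card_fibers:
  assumes "finite A" "\<And>y. y \<in> f ` A \<Longrightarrow> card {x\<in>A. f x = y} = k"
  shows "card A = k * card (f ` A)"
proof -
  have "A = (\<Union>y\<in>f ` A. {x\<in>A. f x = y})" by auto
  then have "card A = card (\<Union>y\<in>f ` A. {x\<in>A. f x = y})" by simp
  also have "\<dots> = (\<Sum>y\<in>f ` A. card {x\<in>A. f x = y})"
    by (rule card_UN_disjoint) (use assms(1) in auto)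
  also have "\<dots> = (\<Sum>y\<in>f ` A. k)" using assms(2) by simp
  finally show ?thesis by simp
qed

locale nqa =
  fixes \<sigma> :: "'k::{field,finite} \<Rightarrow> 'k" and d a :: 'k
  assumes sadd: "\<And>x y. \<sigma> (x + y) = \<sigma> x + \<sigma> y"
    and smult: "\<And>x y. \<sigma> (x * y) = \<sigma> x * \<sigma> y"
    and sinv: "\<And>x. \<sigma> (\<sigma> x) = x"
    and chr: "(2::'k) \<noteq> 0"
    and d_gen: "\<sigma> d \<noteq> d"
    and d_sq: "\<sigma> (d ^ 2) = d ^ 2"
    and a_notin: "\<sigma> a \<noteq> a"
begin

definition FF :: "'k set" where "FF = {x. \<sigma> x = x}"
definition qq :: nat where "qq = card FF"

lemma s0[simp]: "\<sigma> 0 = 0"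
  using sadd[of 0 0] by (metis add.right_neutral add_left_cancel)

lemma s_eq0[simp]: "\<sigma> x = 0 \<longleftrightarrow> x = 0"
  by (metis s0 sinv)

lemma s1[simp]: "\<sigma> 1 = 1"
proof -
  have "\<sigma> 1 * \<sigma> 1 = \<sigma> 1" using smult[of 1 1] by simp
  moreover have "\<sigma> 1 \<noteq> 0" by simp
  ultimately show ?thesis by (metis mult_cancel_left2)
qed

lemma sneg[simp]: "\<sigma> (- x) = - \<sigma> x"
proof -
  have "\<sigma> x + \<sigma> (- x) = 0" using sadd[of x "-x"] by simp
  then show ?thesis by (metis add.inverse_unique)
qed

lemma sdiff[simp]: "\<sigma> (x - y) = \<sigma> x - \<sigma> y"
  using sadd[of x "-y"] by simp

lemma sinverse[simp]: "\<sigma> (inverse x) = inverse (\<sigma> x)"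
proof (cases "x = 0")
  case False
  have "\<sigma> x * \<sigma> (inverse x) = 1" using smult[of x "inverse x"] False by simp
  then show ?thesis by (metis inverse_unique)
qed simp

lemma sdiv[simp]: "\<sigma> (x / y) = \<sigma> x / \<sigma> y"
  by (simp add: divide_inverse smult)

lemma spow[simp]: "\<sigma> (x ^ n) = \<sigma> x ^ n"
  by (induct n) (simp_all add: smult)

lemma spowi[simp]: "\<sigma> (x powi i) = \<sigma> x powi i"
  by (simp add: power_int_def)

lemma s2[simp]: "\<sigma> 2 = 2"
proof -
  have "\<sigma> (1 + 1) = 1 + 1" by (simp only: sadd s1)
  then show ?thesis by simp
qed

lemma sd: "\<sigma> d = - d"
proof -
  have "(\<sigma> d - d) * (\<sigma> d + d) = 0"
    using d_sq by (simp add: power2_eq_square smult algebra_simps)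
  then show ?thesis using d_gen by (simp add: eq_neg_iff_add_eq_0)
qed

lemma d_nz: "d \<noteq> 0" using d_gen by auto

lemma FF_0[simp]: "0 \<in> FF" and FF_1[simp]: "1 \<in> FF" by (auto simp: FF_def)

lemma card_K: "card (UNIV :: 'k set) = qq * qq"
proof -
  let ?f = "\<lambda>(x, y). x + y * d"
  have "bij_betw ?f (FF \<times> FF) UNIV"
  proof (rule bij_betwI')
    fix p p' assume "p \<in> FF \<times> FF" "p' \<in> FF \<times> FF"
    then obtain x y x' y' where p: "p = (x,y)" "p' = (x',y')" and
      s: "\<sigma> x = x" "\<sigma> y = y" "\<sigma> x' = x'" "\<sigma> y' = y'" by (auto simp: FF_def)
    show "(?f p = ?f p') = (p = p')"
    proof
      assume e: "?f p = ?f p'"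
      then have e1: "x + y * d = x' + y' * d" by (simp add: p)
      then have "\<sigma> (x + y * d) = \<sigma> (x' + y' * d)" by simp
      then have e2: "x - y * d = x' - y' * d" unfolding sadd smult sd s by simp
      have tw: "\<And>u v::'k. (u + v) - (u - v) = 2 * v" by (metis add_diff_cancel_left' diff_diff_eq2 mult_2)
      have "(x + y * d) - (x - y * d) = (x' + y' * d) - (x' - y' * d)" by (simp only: e1 e2)
      then have "2 * (y * d) = 2 * (y' * d)" by (simp only: tw)
      then have "y = y'" using chr d_nz by simp
      then show "p = p'" using e1 p by simp
    qed simp
  next
    fix p assume "p \<in> FF \<times> FF" then show "?f p \<in> UNIV" by simp
  next
    fix z :: 'k
    let ?x = "(z + \<sigma> z) / 2" and ?y = "(z - \<sigma> z) / (2 * d)"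
    have hx: "\<sigma> ?x = ?x" by (simp add: sadd sinv add.commute)
    have hy: "\<sigma> ?y = ?y"
    proof -
      have "\<sigma> ?y = (\<sigma> z - z) / (2 * - d)" by (simp add: smult sinv sd)
      also have "\<dots> = ?y" by (simp only: mult_minus_right divide_minus_right minus_divide_left minus_diff_eq)
      finally show ?thesis .
    qed
    have hz: "z = ?x + ?y * d" using d_nz chr by (simp add: add_divide_distrib[symmetric] diff_divide_distrib[symmetric])
    show "\<exists>p\<in>FF \<times> FF. z = ?f p"
    proof (rule bexI[of _ "(?x, ?y)"])
      show "z = ?f (?x, ?y)" using hz by simp
      show "(?x, ?y) \<in> FF \<times> FF" unfolding FF_def using hx hy by blast
    qed
  qed
  then have "card (FF \<times> FF) = card (UNIV :: 'k set)" by (rule bij_betw_same_card)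
  then show ?thesis by (simp add: qq_def card_cartesian_product)
qed

lemma qq_ge2: "qq \<ge> 2"
proof -
  have "{0,1} \<subseteq> FF" by simp
  then have "card {0::'k,1} \<le> qq" unfolding qq_def by (rule card_mono[OF finite])
  then show ?thesis by simp
qed

end

context nqa begin

lemma bij_betw_restr: "bij_betw f A B \<Longrightarrow> bij_betw (restrict f A) A B"
  using bij_betw_cong[of A "restrict f A" f B] by simp

lemma a_nz: "a \<noteq> 0" using a_notin by auto

lemma nozd:
  assumes "x \<noteq> (0,0)" "y \<noteq> (0,0)" shows "nq_mult \<sigma> a x y \<noteq> (0,0)"
proof
  obtain x0 x1 y0 y1 where xy: "x = (x0,x1)" "y = (y0,y1)" by (cases x, cases y) auto
  assume "nq_mult \<sigma> a x y = (0,0)"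
  then have e1: "x0*y0 + x1*\<sigma> y1*a = 0" and e2: "x0*y1 + x1*\<sigma> y0 = 0"
    by (auto simp: nq_mult_def xy)
  show False
  proof (cases "x1 = 0")
    case True
    then have "x0 \<noteq> 0" using assms xy by auto
    then show ?thesis using e1 e2 True assms xy by auto
  next
    case x1: False
    show ?thesis
    proof (cases "x0 = 0")
      case True
      then have "y0 = 0" using e2 x1 by auto
      then show ?thesis using e1 True x1 a_nz assms xy by auto
    next
      case x0: False
      have y0: "y0 \<noteq> 0"
      proof
        assume "y0 = 0"
        then have "y1 = 0" using e2 x0 by auto
        then show False using \<open>y0 = 0\<close> assms xy by auto
      qed
      have s2: "\<sigma> x0 * \<sigma> y1 = - (\<sigma> x1 * y0)"
        using arg_cong[OF e2, of \<sigma>] by (simp add: sadd smult sinv eq_neg_iff_add_eq_0)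
      have "0 = \<sigma> x0 * (x0*y0 + x1*\<sigma> y1*a)" using e1 by simp
      also have "\<dots> = x0 * \<sigma> x0 * y0 + x1 * a * (\<sigma> x0 * \<sigma> y1)" by (simp add: algebra_simps)
      also have "\<dots> = x0 * \<sigma> x0 * y0 - x1 * a * (\<sigma> x1 * y0)" by (simp add: s2)
      also have "\<dots> = y0 * (x0 * \<sigma> x0 - a * (x1 * \<sigma> x1))" by (simp add: algebra_simps)
      finally have "x0 * \<sigma> x0 = a * (x1 * \<sigma> x1)" using y0 by simp
      then have aeq: "a = (x0 * \<sigma> x0) / (x1 * \<sigma> x1)" using x1 by (simp add: field_simps)
      have "\<sigma> a = (\<sigma> x0 * x0) / (\<sigma> x1 * x1)" unfolding aeq by (simp add: smult sinv)
      also have "\<dots> = a" unfolding aeq by (simp add: mult.commute)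
      finally show False using a_notin by simp
    qed
  qed
qed

definition Emap :: "'k \<Rightarrow> 'k \<times> 'k \<Rightarrow> 'k \<times> 'k" where
  "Emap k = (\<lambda>x. (fst x, snd x * k))"
definition Tmap :: "'k \<Rightarrow> 'k \<times> 'k \<Rightarrow> 'k \<times> 'k" where
  "Tmap k = (\<lambda>x. (\<sigma> (fst x), \<sigma> (snd x) * k))"

lemma Emap_app[simp]: "Emap k (x0, x1) = (x0, x1 * k)" by (simp add: Emap_def)
lemma Tmap_app[simp]: "Tmap k (x0, x1) = (\<sigma> x0, \<sigma> x1 * k)" by (simp add: Tmap_def)

lemma Emap_comp: "Emap k \<circ> Emap l = Emap (l * k)" by (auto simp: Emap_def mult.assoc)
lemma ET_comp: "Emap k \<circ> Tmap l = Tmap (l * k)" by (auto simp: Emap_def Tmap_def mult.assoc)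
lemma TE_comp: "Tmap k \<circ> Emap l = Tmap (\<sigma> l * k)" by (auto simp: Emap_def Tmap_def mult.assoc smult)
lemma TT_comp: "Tmap k \<circ> Tmap l = Emap (\<sigma> l * k)" by (auto simp: Emap_def Tmap_def mult.assoc smult sinv)
lemma Emap_1: "Emap 1 = id" by (auto simp: Emap_def)

lemma Emap_mult:
  assumes "k * \<sigma> k = 1"
  shows "Emap k (nq_mult \<sigma> a x y) = nq_mult \<sigma> a (Emap k x) (Emap k y)"
proof -
  obtain x0 x1 y0 y1 where xy: "x = (x0,x1)" "y = (y0,y1)" by (cases x, cases y) auto
  have h: "x1 * k * (\<sigma> y1 * \<sigma> k) * a = x1 * \<sigma> y1 * a"
  proof -
    have "x1 * k * (\<sigma> y1 * \<sigma> k) * a = x1 * \<sigma> y1 * a * (k * \<sigma> k)" by (simp add: algebra_simps)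
    then show ?thesis using assms by simp
  qed
  have c1: "x0*y0 + x1*\<sigma> y1*a = x0*y0 + x1*k*\<sigma>(y1*k)*a" by (simp only: smult h)
  have c2: "(x0*y1 + x1*\<sigma> y0)*k = x0*(y1*k) + x1*k*\<sigma> y0" by (simp add: algebra_simps)
  show ?thesis unfolding xy nq_mult_def by (simp only: fst_conv snd_conv Emap_app c1 c2)
qed

lemma Tmap_mult:
  assumes "k * \<sigma> k * a = \<sigma> a"
  shows "Tmap k (nq_mult \<sigma> a x y) = nq_mult \<sigma> a (Tmap k x) (Tmap k y)"
proof -
  obtain x0 x1 y0 y1 where xy: "x = (x0,x1)" "y = (y0,y1)" by (cases x, cases y) auto
  have h: "\<sigma> x1 * k * (y1 * \<sigma> k) * a = \<sigma> x1 * y1 * \<sigma> a"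
  proof -
    have "\<sigma> x1 * k * (y1 * \<sigma> k) * a = \<sigma> x1 * y1 * (k * \<sigma> k * a)" by (simp add: algebra_simps)
    then show ?thesis using assms by simp
  qed
  have c1: "\<sigma> (x0*y0 + x1*\<sigma> y1*a) = \<sigma> x0*\<sigma> y0 + \<sigma> x1*k*\<sigma>(\<sigma> y1*k)*a"
    by (simp only: sadd smult sinv h)
  have c2: "\<sigma> (x0*y1 + x1*\<sigma> y0)*k = \<sigma> x0*(\<sigma> y1*k) + \<sigma> x1*k*\<sigma>(\<sigma> y0)"
    by (simp add: sadd smult sinv algebra_simps)
  show ?thesis unfolding xy nq_mult_def by (simp only: fst_conv snd_conv Tmap_app c1 c2)
qed

lemma Emap_bij: "k \<noteq> 0 \<Longrightarrow> bij (Emap k)"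
  by (rule o_bij[of "Emap (inverse k)"]) (simp_all add: Emap_comp Emap_1)

lemma Tmap_bij: "k \<noteq> 0 \<Longrightarrow> bij (Tmap k)"
proof (rule o_bij[of "Tmap (\<sigma> (inverse k))"])
  assume k: "k \<noteq> 0"
  show "Tmap (\<sigma> (inverse k)) \<circ> Tmap k = id"
    using k by (simp add: TT_comp Emap_1[symmetric] smult[symmetric])
  show "Tmap k \<circ> Tmap (\<sigma> (inverse k)) = id"
    using k by (simp add: TT_comp Emap_1 sinv)
qed

lemma Emap_alg: assumes "k \<noteq> 0" "k * \<sigma> k = 1" shows "alg_aut \<sigma> a (Emap k)"
  unfolding alg_aut_def using Emap_bij[OF assms(1)] Emap_mult[OF assms(2)]
  by (auto simp: Emap_def algebra_simps)

lemma Tmap_alg: assumes "k \<noteq> 0" "k * \<sigma> k * a = \<sigma> a" shows "alg_aut \<sigma> a (Tmap k)"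
  unfolding alg_aut_def using Tmap_bij[OF assms(1)] Tmap_mult[OF assms(2)]
  by (auto simp: Tmap_def algebra_simps sadd smult)

lemma Emap_0: "k \<noteq> 0 \<Longrightarrow> Emap k x = (0,0) \<longleftrightarrow> x = (0,0)"
  by (cases x) auto
lemma Tmap_0: "k \<noteq> 0 \<Longrightarrow> Tmap k x = (0,0) \<longleftrightarrow> x = (0,0)"
  by (cases x) auto

abbreviation LC :: "('k \<times> 'k) set" where "LC \<equiv> loop_carrier"

lemma alg_to_loop:
  assumes f: "alg_aut \<sigma> a f" and z: "\<And>x. f x = (0,0) \<longleftrightarrow> x = (0,0)"
  shows "loop_aut \<sigma> a (restrict f LC)" "extends_to_alg_aut \<sigma> a (restrict f LC)"
proof -
  have bij: "bij f" and mul: "\<And>x y. f (nq_mult \<sigma> a x y) = nq_mult \<sigma> a (f x) (f y)"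
    using f by (auto simp: alg_aut_def)
  have "bij_betw f LC LC"
    unfolding bij_betw_def
  proof
    show "inj_on f LC" by (meson bij bij_is_inj inj_on_subset subset_UNIV)
    show "f ` LC = LC"
    proof
      show "f ` LC \<subseteq> LC"
      proof
        fix y assume "y \<in> f ` LC"
        then obtain x where x: "x \<in> LC" "y = f x" by auto
        then show "y \<in> LC" using z[of x] unfolding loop_carrier_def by simp
      qed
      show "LC \<subseteq> f ` LC"
      proof
        fix y assume y: "y \<in> LC"
        obtain x where "y = f x" using bij by (metis bij_pointE)
        then show "y \<in> f ` LC" using y z[of x] unfolding loop_carrier_def by auto
      qed
    qed
  qed
  then have "bij_betw (restrict f LC) LC LC" by (rule bij_betw_restr)
  moreover have "\<forall>x\<in>LC. \<forall>y\<in>LC. restrict f LC (nq_mult \<sigma> a x y) = nq_mult \<sigma> a (restrict f LC x) (restrict f LC y)"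
    using nozd mul by (auto simp: loop_carrier_def)
  ultimately show "loop_aut \<sigma> a (restrict f LC)" by (simp add: loop_aut_def)
  show "extends_to_alg_aut \<sigma> a (restrict f LC)"
    unfolding extends_to_alg_aut_def using f by auto
qed

lemma Emap_LC: "k \<noteq> 0 \<Longrightarrow> Emap k ` LC \<subseteq> LC"
  using Emap_0 by (auto simp: loop_carrier_def)
lemma Tmap_LC: "k \<noteq> 0 \<Longrightarrow> Tmap k ` LC \<subseteq> LC"
  using Tmap_0 by (auto simp: loop_carrier_def)

lemma AutL_mult: "g ` LC \<subseteq> LC \<Longrightarrow> restrict f LC \<otimes>\<^bsub>AutL \<sigma> a\<^esub> restrict g LC = restrict (f \<circ> g) LC"
  by (auto simp: AutL_def restrict_def fun_eq_iff)

lemma AutL_one: "\<one>\<^bsub>AutL \<sigma> a\<^esub> = restrict id LC" by (simp add: AutL_def)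

lemma loop_aut_into: "loop_aut \<sigma> a \<phi> \<Longrightarrow> x \<in> LC \<Longrightarrow> \<phi> x \<in> LC"
  by (auto simp: loop_aut_def bij_betw_def)

lemma AutL_monoid: "monoid (AutL \<sigma> a)"
proof
  fix x y z
  assume x: "x \<in> carrier (AutL \<sigma> a)" and y: "y \<in> carrier (AutL \<sigma> a)"
  then have lx: "loop_aut \<sigma> a x" and ly: "loop_aut \<sigma> a y" by (auto simp: AutL_def)
  have "loop_aut \<sigma> a (restrict (x \<circ> y) LC)"
    unfolding loop_aut_def
  proof (intro conjI ballI)
    have "bij_betw (x \<circ> y) LC LC" using bij_betw_trans[of y LC LC x LC] lx ly unfolding loop_aut_def by blast
    then show "bij_betw (restrict (x \<circ> y) LC) LC LC" by (rule bij_betw_restr)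
    show "restrict (x \<circ> y) LC \<in> extensional LC" by simp
    fix u v assume u: "u \<in> LC" and v: "v \<in> LC"
    then have "nq_mult \<sigma> a u v \<in> LC" using nozd by (auto simp: loop_carrier_def)
    then show "restrict (x \<circ> y) LC (nq_mult \<sigma> a u v) = nq_mult \<sigma> a (restrict (x \<circ> y) LC u) (restrict (x \<circ> y) LC v)"
      using u v lx ly loop_aut_into[OF ly u] loop_aut_into[OF ly v] by (simp add: loop_aut_def)
  qed
  then show "x \<otimes>\<^bsub>AutL \<sigma> a\<^esub> y \<in> carrier (AutL \<sigma> a)" by (simp add: AutL_def)
  assume z: "z \<in> carrier (AutL \<sigma> a)"
  then have lz: "loop_aut \<sigma> a z" by (auto simp: AutL_def)
  show "x \<otimes>\<^bsub>AutL \<sigma> a\<^esub> y \<otimes>\<^bsub>AutL \<sigma> a\<^esub> z = x \<otimes>\<^bsub>AutL \<sigma> a\<^esub> (y \<otimes>\<^bsub>AutL \<sigma> a\<^esub> z)"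
    using loop_aut_into[OF lz] loop_aut_into[OF ly] by (auto simp: AutL_def fun_eq_iff)
next
  show "\<one>\<^bsub>AutL \<sigma> a\<^esub> \<in> carrier (AutL \<sigma> a)"
  proof -
    have "bij_betw (restrict id LC) LC LC" by (rule bij_betw_restr) simp
    moreover have "nq_mult \<sigma> a u v \<in> LC" if "u \<in> LC" "v \<in> LC" for u v
      using nozd that by (auto simp: loop_carrier_def)
    ultimately have "loop_aut \<sigma> a (restrict id LC)" unfolding loop_aut_def by simp
    then show ?thesis by (simp add: AutL_def)
  qed
next
  fix x assume x: "x \<in> carrier (AutL \<sigma> a)"
  then have lx: "loop_aut \<sigma> a x" by (auto simp: AutL_def)
  then have ex: "x \<in> extensional LC" by (simp add: loop_aut_def)
  show "\<one>\<^bsub>AutL \<sigma> a\<^esub> \<otimes>\<^bsub>AutL \<sigma> a\<^esub> x = x"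
    using loop_aut_into[OF lx] ex by (auto simp: AutL_def fun_eq_iff extensional_def)
  show "x \<otimes>\<^bsub>AutL \<sigma> a\<^esub> \<one>\<^bsub>AutL \<sigma> a\<^esub> = x"
    using ex by (auto simp: AutL_def fun_eq_iff extensional_def)
qed

end

lemma qsq: "(q::nat) * q - 1 = (q - 1) * (q + 1)"
  by (cases q) (simp_all add: algebra_simps)

lemma arith1: assumes "(q::nat) \<ge> 2" "q * q - 1 = (q - 1) * c" shows "c = q + 1"
proof -
  have e: "(q - 1) * (q + 1) = (q - 1) * c" using assms(2) by (simp only: qsq)
  have "q - 1 \<noteq> 0" using assms(1) by simp
  then show ?thesis using e mult_left_cancel by metis
qed

lemma arith2: assumes "(q::nat) \<ge> 2" "q * q - 1 = (q + 1) * c" shows "c = q - 1"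
proof -
  have e: "(q + 1) * (q - 1) = (q + 1) * c" using assms(2) by (simp only: qsq mult.commute)
  have "q + 1 \<noteq> 0" by simp
  then show ?thesis using e mult_left_cancel by metis
qed

context nqa begin

definition rho :: "'k \<Rightarrow> 'k" where "rho c = \<sigma> c / c"
definition Nm :: "'k \<Rightarrow> 'k" where "Nm c = c * \<sigma> c"
abbreviation KS :: "'k set" where "KS \<equiv> UNIV - {0}"
abbreviation FS :: "'k set" where "FS \<equiv> FF - {0}"

lemma card_KS: "card KS = qq * qq - 1"
  using card_K by (simp add: card_Diff_singleton)

lemma card_FS: "card FS = qq - 1"
  by (simp add: card_Diff_singleton qq_def)

lemma qq_form: obtains p where "qq = p + 2"
  using qq_ge2 by (metis add.commute le_Suc_ex)

lemma rho_nz: "c \<noteq> 0 \<Longrightarrow> rho c \<noteq> 0" by (simp add: rho_def)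

lemma Nm_rho: "c \<noteq> 0 \<Longrightarrow> Nm (rho c) = 1"
  by (simp add: Nm_def rho_def sinv)

lemma card_V: "card (rho ` KS) = qq + 1"
proof -
  have "card KS = (qq - 1) * card (rho ` KS)"
  proof (rule card_fibers)
    fix y assume "y \<in> rho ` KS"
    then obtain e where e: "e \<noteq> 0" "y = rho e" by auto
    have se: "\<sigma> e \<noteq> 0" using e by simp
    have "{x\<in>KS. rho x = y} = (\<lambda>t. t * e) ` FS"
    proof
      show "{x\<in>KS. rho x = y} \<subseteq> (\<lambda>t. t * e) ` FS"
      proof
        fix x assume "x \<in> {x\<in>KS. rho x = y}"
        then have x: "x \<noteq> 0" "\<sigma> x / x = \<sigma> e / e" using e by (auto simp: rho_def)
        then have "\<sigma> x * e = \<sigma> e * x" using e by (simp add: frac_eq_eq)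
        then have "\<sigma> (x / e) = x / e" using e se by (simp add: frac_eq_eq mult.commute)
        moreover have "x / e \<noteq> 0" using x e by simp
        moreover have "x = (x / e) * e" using e by simp
        ultimately show "x \<in> (\<lambda>t. t * e) ` FS" unfolding FF_def by blast
      qed
      show "(\<lambda>t. t * e) ` FS \<subseteq> {x\<in>KS. rho x = y}"
      proof
        fix x assume "x \<in> (\<lambda>t. t * e) ` FS"
        then obtain t where t: "\<sigma> t = t" "t \<noteq> 0" "x = t * e" by (auto simp: FF_def)
        then show "x \<in> {x\<in>KS. rho x = y}" using e by (simp add: rho_def smult)
      qed
    qed
    moreover have "inj_on (\<lambda>t. t * e) FS" using e by (auto simp: inj_on_def)
    ultimately show "card {x\<in>KS. rho x = y} = qq - 1"
      by (simp add: card_image card_FS)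
  qed simp
  then have "qq * qq - 1 = (qq - 1) * card (rho ` KS)" by (simp add: card_KS)
  then show ?thesis using arith1 qq_ge2 by blast
qed

lemma rho_mult: "rho (x * y) = rho x * rho y" by (simp add: rho_def smult)
lemma rho_pow: "rho (x ^ i) = rho x ^ i" by (simp add: rho_def power_divide)

lemma hilbert90:
  assumes "Nm u = 1" shows "\<exists>c. c \<noteq> 0 \<and> rho c = u"
proof (cases "u = -1")
  case True
  then show ?thesis using d_nz by (intro exI[of _ d]) (simp add: rho_def sd)
next
  case False
  have su: "u * \<sigma> u = 1" using assms by (simp add: Nm_def)
  have c: "1 + \<sigma> u \<noteq> 0"
  proof
    assume "1 + \<sigma> u = 0"
    then have "\<sigma> u = -1" by (simp add: add_eq_0_iff)
    then have "u = -1" by (metis sinv sneg s1)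
    then show False using False by simp
  qed
  have "\<sigma> (1 + \<sigma> u) = u * (1 + \<sigma> u)" using su by (simp add: sadd sinv algebra_simps)
  then have "rho (1 + \<sigma> u) = u" using c by (simp add: rho_def)
  then show ?thesis using c by blast
qed

lemma U_eq: "{u. Nm u = 1} = rho ` KS"
proof
  show "{u. Nm u = 1} \<subseteq> rho ` KS" using hilbert90 by blast
  show "rho ` KS \<subseteq> {u. Nm u = 1}" using Nm_rho by auto
qed

lemma Nm_mult: "Nm (x * y) = Nm x * Nm y" by (simp add: Nm_def smult algebra_simps)

lemma norm_minus1: "\<exists>m. m \<noteq> 0 \<and> m * \<sigma> m = -1"
proof -
  have "card KS = (qq + 1) * card (Nm ` KS)"
  proof (rule card_fibers)
    fix y assume "y \<in> Nm ` KS"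
    then obtain e where e: "e \<noteq> 0" "y = Nm e" by auto
    have ne: "Nm e \<noteq> 0" using e by (simp add: Nm_def)
    have "{x\<in>KS. Nm x = y} = (\<lambda>u. u * e) ` {u. Nm u = 1}"
    proof
      show "{x\<in>KS. Nm x = y} \<subseteq> (\<lambda>u. u * e) ` {u. Nm u = 1}"
      proof
        fix x assume "x \<in> {x\<in>KS. Nm x = y}"
        then have x: "Nm x = Nm e" using e by auto
        have "Nm (x / e) = Nm x / Nm e" by (simp add: Nm_def times_divide_times_eq)
        then have "Nm (x / e) = 1" using x ne by simp
        moreover have "x = (x / e) * e" using e by simp
        ultimately show "x \<in> (\<lambda>u. u * e) ` {u. Nm u = 1}" by blast
      qed
      show "(\<lambda>u. u * e) ` {u. Nm u = 1} \<subseteq> {x\<in>KS. Nm x = y}"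
      proof
        fix x assume "x \<in> (\<lambda>u. u * e) ` {u. Nm u = 1}"
        then obtain u where u: "Nm u = 1" "x = u * e" by auto
        then have "u \<noteq> 0" by (auto simp: Nm_def)
        then show "x \<in> {x\<in>KS. Nm x = y}" using u e by (simp add: Nm_mult)
      qed
    qed
    moreover have "inj_on (\<lambda>u. u * e) {u. Nm u = 1}" using e by (auto simp: inj_on_def)
    ultimately show "card {x\<in>KS. Nm x = y} = qq + 1"
      by (simp add: card_image U_eq card_V)
  qed simp
  then have c1: "qq * qq - 1 = (qq + 1) * card (Nm ` KS)" by (simp add: card_KS)
  then have "card (Nm ` KS) = qq - 1" using arith2 qq_ge2 by blast
  moreover have sub: "Nm ` KS \<subseteq> FS" by (auto simp: FF_def Nm_def smult sinv mult.commute)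
  ultimately have "Nm ` KS = FS"
    by (metis card_FS card_subset_eq finite)
  moreover have "-1 \<in> FS" by (simp add: FF_def)
  ultimately obtain m where "m \<noteq> 0" "Nm m = -1" by (metis (no_types, lifting) DiffE imageE insertI1)
  then show ?thesis by (auto simp: Nm_def)
qed

end

lemma pow_mod_eq:
  fixes h :: "'k::field"
  assumes "h ^ k = 1" shows "h ^ i = h ^ (i mod k)"
proof -
  have "h ^ i = h ^ (k * (i div k) + i mod k)" by simp
  also have "\<dots> = (h ^ k) ^ (i div k) * h ^ (i mod k)" by (simp only: power_add power_mult)
  finally show ?thesis using assms by simp
qed

locale cyc =
  fixes h :: "'k::field" and n :: nat
  assumes h_nz: "h \<noteq> 0" and card_rng: "card (range (\<lambda>i::nat. h ^ i)) = n" and n_pos: "n > 0"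
begin

lemma fin_rng: "finite (range (\<lambda>i::nat. h ^ i))"
  using card_rng n_pos card_gt_0_iff by blast

lemma O1: assumes "0 < k" "k < n" shows "h ^ k \<noteq> 1"
proof
  assume hk: "h ^ k = 1"
  have "range (\<lambda>i::nat. h ^ i) \<subseteq> (\<lambda>i. h ^ i) ` {..<k}"
  proof
    fix y assume "y \<in> range (\<lambda>i::nat. h ^ i)"
    then obtain i where "y = h ^ i" by auto
    then have "y = h ^ (i mod k)" using pow_mod_eq[OF hk] by simp
    moreover have "i mod k < k" using assms by simp
    ultimately show "y \<in> (\<lambda>i. h ^ i) ` {..<k}" by auto
  qed
  then have "card (range (\<lambda>i::nat. h ^ i)) \<le> card ((\<lambda>i. h ^ i) ` {..<k})"
    by (rule card_mono[rotated]) simp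
  also have "\<dots> \<le> card {..<k}" by (rule card_image_le) simp
  finally show False using card_rng assms by simp
qed

lemma pow_inj: assumes "i < n" "j < n" "h ^ i = h ^ j" shows "i = j"
proof (rule ccontr)
  assume ne: "i \<noteq> j"
  have *: "i < j \<Longrightarrow> h ^ i = h ^ j \<Longrightarrow> j < n \<Longrightarrow> False" for i j
  proof -
    assume ij: "i < j" "h ^ i = h ^ j" "j < n"
    have "h ^ j = h ^ i * h ^ (j - i)" using ij by (metis le_add_diff_inverse less_imp_le power_add)
    then have "h ^ (j - i) = 1" using ij h_nz by simp
    then show False using O1[of "j - i"] ij by simp
  qed
  show False using ne assms * by (metis linorder_neqE_nat)
qed

lemma O2: "h ^ n = 1"
proof -
  have "\<not> inj_on (\<lambda>i. h ^ i) {..n}"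
  proof
    assume "inj_on (\<lambda>i. h ^ i) {..n}"
    then have "card ((\<lambda>i. h ^ i) ` {..n}) = n + 1" by (simp add: card_image)
    moreover have "card ((\<lambda>i. h ^ i) ` {..n}) \<le> n"
      using card_mono[OF fin_rng, of "(\<lambda>i. h ^ i) ` {..n}"] card_rng by auto
    ultimately show False by simp
  qed
  then obtain i j where ij: "i \<le> n" "j \<le> n" "i < j" "h ^ i = h ^ j"
    unfolding inj_on_def by (metis atMost_iff linorder_neqE_nat)
  have "h ^ j = h ^ i * h ^ (j - i)" using ij by (metis le_add_diff_inverse less_imp_le power_add)
  then have hj: "h ^ (j - i) = 1" using ij h_nz by simp
  then have "\<not> j - i < n" using O1[of "j - i"] ij by auto
  then have "i = 0" "j = n" using ij by auto
  then show ?thesis using hj by simp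
qed

lemma pow_one_dvd: "h ^ k = 1 \<Longrightarrow> n dvd k"
  using pow_mod_eq[OF O2, of k] O1[of "k mod n"] n_pos by (auto simp: dvd_eq_mod_eq_0)

definition hp :: "int \<Rightarrow> 'k" where "hp i = h powi i"

lemma hp_nz: "hp i \<noteq> 0" by (simp add: hp_def h_nz)
lemma hp_add: "hp (i + j) = hp i * hp j" by (simp add: hp_def power_int_add h_nz)
lemma hp_0: "hp 0 = 1" by (simp add: hp_def)
lemma hp_nat: "hp (int k) = h ^ k" by (simp add: hp_def)
lemma hp_mod: "hp (i mod int n) = hp i"
proof -
  have "hp i = hp (int n * (i div int n) + i mod int n)" by simp
  also have "\<dots> = hp (int n * (i div int n)) * hp (i mod int n)" by (rule hp_add)
  also have "hp (int n * (i div int n)) = 1" by (simp add: hp_def power_int_mult O2)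
  finally show ?thesis by simp
qed
lemma hp_neg: "hp (- i) = inverse (hp i)" by (simp add: hp_def power_int_minus)

lemma hp_inj: assumes "0 \<le> i" "i < int n" "0 \<le> j" "j < int n" "hp i = hp j" shows "i = j"
proof -
  have "h ^ nat i = h ^ nat j" using assms hp_nat[of "nat i"] hp_nat[of "nat j"] by simp
  then have "nat i = nat j" using pow_inj assms by simp
  then show ?thesis using assms by simp
qed

end

context nqa begin

lemma h_exists: "\<exists>h. h \<noteq> 0 \<and> \<sigma> h = inverse h \<and> range (\<lambda>i::nat. h ^ i) = rho ` KS"
proof -
  obtain g :: 'k where g: "g \<noteq> 0" "\<And>x. x \<noteq> 0 \<Longrightarrow> \<exists>i. x = g ^ i" using gen_exists by blast
  define h where "h = rho g"
  have "h \<noteq> 0" using g by (simp add: h_def rho_nz)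
  moreover have "\<sigma> h = inverse h" using g by (simp add: h_def rho_def sinv)
  moreover have "range (\<lambda>i::nat. h ^ i) = rho ` KS"
  proof
    show "range (\<lambda>i::nat. h ^ i) \<subseteq> rho ` KS"
    proof
      fix y assume "y \<in> range (\<lambda>i::nat. h ^ i)"
      then obtain i where "y = h ^ i" by auto
      then have "y = rho (g ^ i)" by (simp add: h_def rho_pow)
      moreover have "g ^ i \<in> KS" using g by simp
      ultimately show "y \<in> rho ` KS" by blast
    qed
    show "rho ` KS \<subseteq> range (\<lambda>i::nat. h ^ i)"
    proof
      fix y assume "y \<in> rho ` KS"
      then obtain x where x: "x \<noteq> 0" "y = rho x" by auto
      then obtain i where "x = g ^ i" using g by blast
      then have "y = h ^ i" using x by (simp add: h_def rho_pow)
      then show "y \<in> range (\<lambda>i::nat. h ^ i)" by simp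
    qed
  qed
  ultimately show ?thesis by blast
qed

end

lemma img_subgroup_iso:
  fixes G :: "('a, 'c) monoid_scheme" and D :: "('d, 'e) monoid_scheme"
  assumes G: "monoid G"
    and into: "\<And>x. x \<in> carrier D \<Longrightarrow> \<psi> x \<in> carrier G"
    and cl: "\<And>x y. x \<in> carrier D \<Longrightarrow> y \<in> carrier D \<Longrightarrow> x \<otimes>\<^bsub>D\<^esub> y \<in> carrier D"
    and hom: "\<And>x y. x \<in> carrier D \<Longrightarrow> y \<in> carrier D \<Longrightarrow> \<psi> (x \<otimes>\<^bsub>D\<^esub> y) = \<psi> x \<otimes>\<^bsub>G\<^esub> \<psi> y"
    and one1: "\<one>\<^bsub>D\<^esub> \<in> carrier D" and one2: "\<psi> \<one>\<^bsub>D\<^esub> = \<one>\<^bsub>G\<^esub>"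
    and inv: "\<And>x. x \<in> carrier D \<Longrightarrow> \<exists>y\<in>carrier D. x \<otimes>\<^bsub>D\<^esub> y = \<one>\<^bsub>D\<^esub> \<and> y \<otimes>\<^bsub>D\<^esub> x = \<one>\<^bsub>D\<^esub>"
    and inj: "inj_on \<psi> (carrier D)"
  shows "subgroup (\<psi> ` carrier D) G \<and> G\<lparr>carrier := \<psi> ` carrier D\<rparr> \<cong> D"
proof
  show "subgroup (\<psi> ` carrier D) G"
  proof (rule subgroup.intro)
    show "\<psi> ` carrier D \<subseteq> carrier G" using into by auto
    show "x \<otimes>\<^bsub>G\<^esub> y \<in> \<psi> ` carrier D" if "x \<in> \<psi> ` carrier D" "y \<in> \<psi> ` carrier D" for x y
      using that hom cl by (auto simp flip: hom)
    show "\<one>\<^bsub>G\<^esub> \<in> \<psi> ` carrier D" using one1 one2 by (metis imageI)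
    show "inv\<^bsub>G\<^esub> x \<in> \<psi> ` carrier D" if xin: "x \<in> \<psi> ` carrier D" for x
    proof -
      obtain u where u: "u \<in> carrier D" "x = \<psi> u" using xin by auto
      obtain v where v: "v \<in> carrier D" "u \<otimes>\<^bsub>D\<^esub> v = \<one>\<^bsub>D\<^esub>" "v \<otimes>\<^bsub>D\<^esub> u = \<one>\<^bsub>D\<^esub>"
        using inv[OF u(1)] by blast
      have "\<psi> v = inv\<^bsub>G\<^esub> (\<psi> u)"
        by (rule monoid.inv_unique'[OF G into[OF u(1)] into[OF v(1)]])
           (simp_all add: hom[symmetric] u(1) v one2)
      then show ?thesis using u v by (metis imageI)
    qed
  qed
  have bij: "bij_betw \<psi> (carrier D) (\<psi> ` carrier D)" using inj by (simp add: bij_betw_imageI)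
  have "inv_into (carrier D) \<psi> \<in> iso (G\<lparr>carrier := \<psi> ` carrier D\<rparr>) D"
  proof (rule isoI)
    show "bij_betw (inv_into (carrier D) \<psi>) (carrier (G\<lparr>carrier := \<psi> ` carrier D\<rparr>)) (carrier D)"
      using bij_betw_inv_into[OF bij] by simp
    show "inv_into (carrier D) \<psi> \<in> hom (G\<lparr>carrier := \<psi> ` carrier D\<rparr>) D"
      unfolding hom_def
    proof (intro CollectI conjI ballI)
      show "inv_into (carrier D) \<psi> \<in> carrier (G\<lparr>carrier := \<psi> ` carrier D\<rparr>) \<rightarrow> carrier D"
        by (auto intro: inv_into_into)
      fix x y assume "x \<in> carrier (G\<lparr>carrier := \<psi> ` carrier D\<rparr>)" "y \<in> carrier (G\<lparr>carrier := \<psi> ` carrier D\<rparr>)"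
      then obtain u v where uv: "u \<in> carrier D" "v \<in> carrier D" "x = \<psi> u" "y = \<psi> v" by auto
      have "x \<otimes>\<^bsub>G\<lparr>carrier := \<psi> ` carrier D\<rparr>\<^esub> y = \<psi> (u \<otimes>\<^bsub>D\<^esub> v)" using uv hom by simp
      then show "inv_into (carrier D) \<psi> (x \<otimes>\<^bsub>G\<lparr>carrier := \<psi> ` carrier D\<rparr>\<^esub> y) =
            inv_into (carrier D) \<psi> x \<otimes>\<^bsub>D\<^esub> inv_into (carrier D) \<psi> y"
        using uv inj cl by (simp add: inv_into_f_f)
    qed
  qed
  then show "G\<lparr>carrier := \<psi> ` carrier D\<rparr> \<cong> D" by (rule is_isoI)
qed

context nqa begin

lemma inner_Emap:
  assumes c: "c \<noteq> 0"
  shows "inner_aut \<sigma> a (restrict (Emap (rho c)) LC)"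
proof -
  have k: "rho c \<noteq> 0" "rho c * \<sigma> (rho c) = 1" using c Nm_rho[OF c] by (auto simp: rho_nz Nm_def)
  have la: "loop_aut \<sigma> a (restrict (Emap (rho c)) LC)"
    using alg_to_loop(1)[OF Emap_alg[OF k] Emap_0[OF k(1)]] .
  have mem: "(c, 0) \<in> LC" "(inverse c, 0) \<in> LC" using c by (auto simp: loop_carrier_def)
  have m1: "nq_mult \<sigma> a (inverse c, 0) (c, 0) = (1, 0)" using c by (simp add: nq_mult_def)
  have m2: "\<forall>x\<in>LC. restrict (Emap (rho c)) LC x = nq_mult \<sigma> a (nq_mult \<sigma> a (inverse c, 0) x) (c, 0)"
  proof
    fix x :: "'k \<times> 'k" assume x: "x \<in> LC"
    obtain x0 x1 where xx: "x = (x0, x1)" by (cases x)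
    show "restrict (Emap (rho c)) LC x = nq_mult \<sigma> a (nq_mult \<sigma> a (inverse c, 0) x) (c, 0)"
      using x c by (simp add: xx nq_mult_def rho_def field_simps)
  qed
  show ?thesis unfolding inner_aut_def using la mem m1 m2 by blast
qed

lemma part1:
  "\<exists>H. subgroup H (AutL \<sigma> a) \<and> (AutL \<sigma> a)\<lparr>carrier := H\<rparr> \<cong> integer_mod_group (qq + 1) \<and>
     (\<forall>\<phi>\<in>H. inner_aut \<sigma> a \<phi> \<and> extends_to_alg_aut \<sigma> a \<phi>)"
proof -
  obtain h where h: "h \<noteq> 0" "\<sigma> h = inverse h" "range (\<lambda>i::nat. h ^ i) = rho ` KS"
    using h_exists by blast
  interpret C: cyc h "qq + 1"
    by unfold_locales (simp_all add: h card_V)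
  have shp: "\<sigma> (C.hp i) = C.hp (- i)" for i
    unfolding C.hp_def by (simp add: h(2) power_int_inverse power_int_minus)
  have Nhp: "C.hp i * \<sigma> (C.hp i) = 1" for i
    by (simp add: shp C.hp_neg C.hp_nz)
  define \<phi> where "\<phi> i = restrict (Emap (C.hp i)) LC" for i
  have alg: "alg_aut \<sigma> a (Emap (C.hp i))" for i by (rule Emap_alg[OF C.hp_nz Nhp])
  have la: "loop_aut \<sigma> a (\<phi> i)" and ext: "extends_to_alg_aut \<sigma> a (\<phi> i)" for i
    unfolding \<phi>_def using alg_to_loop[OF alg Emap_0[OF C.hp_nz]] by auto
  have hpm: "C.hp (i mod (1 + int qq)) = C.hp i" for i using C.hp_mod[of i] by simp
  let ?D = "integer_mod_group (qq + 1)"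
  have cD: "carrier ?D = {0..<int (qq + 1)}" by (simp add: carrier_integer_mod_group)
  have main: "subgroup (\<phi> ` carrier ?D) (AutL \<sigma> a) \<and> (AutL \<sigma> a)\<lparr>carrier := \<phi> ` carrier ?D\<rparr> \<cong> ?D"
  proof (rule img_subgroup_iso[OF AutL_monoid])
    show "\<phi> x \<in> carrier (AutL \<sigma> a)" for x using la by (simp add: AutL_def)
    show "x \<otimes>\<^bsub>?D\<^esub> y \<in> carrier ?D" if "x \<in> carrier ?D" "y \<in> carrier ?D" for x y
      using cD by simp
    show "\<phi> (x \<otimes>\<^bsub>?D\<^esub> y) = \<phi> x \<otimes>\<^bsub>AutL \<sigma> a\<^esub> \<phi> y" for x y
    proof -
      have "\<phi> x \<otimes>\<^bsub>AutL \<sigma> a\<^esub> \<phi> y = restrict (Emap (C.hp x) \<circ> Emap (C.hp y)) LC"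
        unfolding \<phi>_def by (rule AutL_mult[OF Emap_LC[OF C.hp_nz]])
      also have "\<dots> = \<phi> (x \<otimes>\<^bsub>?D\<^esub> y)"
        by (simp add: \<phi>_def Emap_comp hpm C.hp_add mult.commute)
      finally show ?thesis by simp
    qed
    show "\<one>\<^bsub>?D\<^esub> \<in> carrier ?D" by simp
    show "\<phi> \<one>\<^bsub>?D\<^esub> = \<one>\<^bsub>AutL \<sigma> a\<^esub>" by (simp add: \<phi>_def C.hp_0 Emap_1 AutL_one)
    show "\<exists>y\<in>carrier ?D. x \<otimes>\<^bsub>?D\<^esub> y = \<one>\<^bsub>?D\<^esub> \<and> y \<otimes>\<^bsub>?D\<^esub> x = \<one>\<^bsub>?D\<^esub>" if "x \<in> carrier ?D" for x
      using group.r_inv[OF group_integer_mod_group that] group.l_inv[OF group_integer_mod_group that]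
        group.inv_closed[OF group_integer_mod_group that] by blast
    show "inj_on \<phi> (carrier ?D)"
    proof
      fix x y assume xy: "x \<in> carrier ?D" "y \<in> carrier ?D" "\<phi> x = \<phi> y"
      have "(0::'k, 1::'k) \<in> LC" by (simp add: loop_carrier_def)
      then have "\<phi> x (0, 1) = \<phi> y (0, 1)" using xy by simp
      then have "C.hp x = C.hp y" using \<open>(0::'k, 1::'k) \<in> LC\<close> by (simp add: \<phi>_def)
      then show "x = y" using C.hp_inj xy cD by auto
    qed
  qed
  moreover have "\<forall>\<psi>\<in>\<phi> ` carrier ?D. inner_aut \<sigma> a \<psi> \<and> extends_to_alg_aut \<sigma> a \<psi>"
  proof
    fix \<psi> assume "\<psi> \<in> \<phi> ` carrier ?D"
    then obtain i where \<psi>: "\<psi> = \<phi> i" by auto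
    obtain c where c: "c \<noteq> 0" "rho c = C.hp i" using hilbert90[of "C.hp i"] Nhp by (auto simp: Nm_def)
    have "inner_aut \<sigma> a (restrict (Emap (rho c)) LC)" by (rule inner_Emap[OF c(1)])
    then show "inner_aut \<sigma> a \<psi> \<and> extends_to_alg_aut \<sigma> a \<psi>" using ext \<psi> c by (simp add: \<phi>_def)
  qed
  ultimately show ?thesis by blast
qed

end

context nqa begin

lemma part2:
  assumes lam: "\<sigma> lam = lam" "lam \<noteq> 0" "a = lam * d"
  shows "\<exists>H. subgroup H (AutL \<sigma> a) \<and> (AutL \<sigma> a)\<lparr>carrier := H\<rparr> \<cong> dicyclic_group ((qq + 1) div 2) \<and>
     (\<forall>\<phi>\<in>H. extends_to_alg_aut \<sigma> a \<phi>)"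
proof -
  have sa: "\<sigma> a = - a" using lam by (simp add: smult sd)
  obtain h where h: "h \<noteq> 0" "\<sigma> h = inverse h" "range (\<lambda>i::nat. h ^ i) = rho ` KS"
    using h_exists by blast
  interpret C: cyc h "qq + 1"
    by unfold_locales (simp_all add: h card_V)
  have shp: "\<sigma> (C.hp i) = C.hp (- i)" for i
    unfolding C.hp_def by (simp add: h(2) power_int_inverse power_int_minus)
  have Nhp: "C.hp i * \<sigma> (C.hp i) = 1" for i
    by (simp add: shp C.hp_neg C.hp_nz)
  define l where "l = (qq + 1) div 2"
  have m1: "-1 \<in> range (\<lambda>i::nat. h ^ i)" unfolding h(3) U_eq[symmetric] by (simp add: Nm_def)
  then obtain j0 where "h ^ j0 = -1" by auto
  then have j: "h ^ (j0 mod (qq + 1)) = -1" using pow_mod_eq[OF C.O2] by simp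
  define j where "j = j0 mod (qq + 1)"
  have hj: "h ^ j = -1" using j by (simp add: j_def)
  have jlt: "j < qq + 1" by (simp add: j_def)
  have m1ne: "(-1::'k) \<noteq> 1"
  proof
    assume "(-1::'k) = 1"
    then have "(2::'k) = 0" by (metis one_add_one add.right_inverse)
    then show False using chr by simp
  qed
  have "j \<noteq> 0"
  proof
    assume "j = 0"
    then have "h ^ j = 1" by simp
    then show False using hj m1ne by simp
  qed
  have "qq + 1 dvd 2 * j"
  proof (rule C.pow_one_dvd)
    have "h ^ (2 * j) = (h ^ j) ^ 2" by (simp only: mult.commute[of 2 j] power_mult)
    then show "h ^ (2 * j) = 1" using hj by simp
  qed
  then obtain t where t: "2 * j = (qq + 1) * t" by (rule dvdE)
  have "(qq + 1) * t < (qq + 1) * 2" using jlt t by simp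
  then have "t < 2" by (metis mult_less_cancel1)
  moreover have "t \<noteq> 0"
  proof
    assume "t = 0"
    then have "2 * j = 0" using t by (simp only: mult_0_right)
    then show False using \<open>j \<noteq> 0\<close> by simp
  qed
  ultimately have "t = 1" by simp
  then have "2 * j = qq + 1" using t by simp
  then have e2: "qq + 1 = 2 * j" by simp
  have jl: "j = l" unfolding l_def e2 by simp
  have n2: "int (qq + 1) = 2 * int l" unfolding e2 jl by simp
  have hpl: "C.hp (int l) = -1" using hj jl by (simp add: C.hp_nat)
  have lpos: "l > 0" using jl \<open>j \<noteq> 0\<close> by simp
  have hpm: "C.hp (i mod (2 * int l)) = C.hp i" for i using C.hp_mod[of i] n2 by simp
  have hpm2: "C.hp (i mod (int l * 2)) = C.hp i" for i using hpm[of i] by (simp add: mult.commute)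
  obtain m where m: "m \<noteq> 0" "m * \<sigma> m = -1" using norm_minus1 by blast
  have knz: "m * C.hp i \<noteq> 0" for i using m C.hp_nz by simp
  have Tc: "(m * C.hp i) * \<sigma> (m * C.hp i) * a = \<sigma> a" for i
  proof -
    have "(m * C.hp i) * \<sigma> (m * C.hp i) * a = (m * \<sigma> m) * (C.hp i * \<sigma> (C.hp i)) * a"
      by (simp add: smult algebra_simps)
    then show ?thesis using m Nhp sa by simp
  qed
  define \<psi> where "\<psi> x = (if snd x then restrict (Tmap (m * C.hp (fst x))) LC else restrict (Emap (C.hp (fst x))) LC)" for x
  have algE: "alg_aut \<sigma> a (Emap (C.hp i))" for i by (rule Emap_alg[OF C.hp_nz Nhp])
  have algT: "alg_aut \<sigma> a (Tmap (m * C.hp i))" for i by (rule Tmap_alg[OF knz Tc])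
  have la: "loop_aut \<sigma> a (\<psi> x)" and ext: "extends_to_alg_aut \<sigma> a (\<psi> x)" for x
    unfolding \<psi>_def using alg_to_loop[OF algE Emap_0[OF C.hp_nz]] alg_to_loop[OF algT Tmap_0[OF knz]] by auto
  let ?D = "dicyclic_group l"
  let ?N = "2 * int l"
  have cD: "carrier ?D = {0..<?N} \<times> UNIV" by (simp add: dicyclic_group_def)
  have mD: "(i, e) \<otimes>\<^bsub>?D\<^esub> (j, f) = (if \<not> e then ((i + j) mod ?N, f)
        else if \<not> f then ((i - j) mod ?N, True) else ((i - j + int l) mod ?N, False))" for i j e f
    by (simp add: dicyclic_group_def)
  have main: "subgroup (\<psi> ` carrier ?D) (AutL \<sigma> a) \<and> (AutL \<sigma> a)\<lparr>carrier := \<psi> ` carrier ?D\<rparr> \<cong> ?D"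
  proof (rule img_subgroup_iso[OF AutL_monoid])
    show "\<psi> x \<in> carrier (AutL \<sigma> a)" for x using la by (simp add: AutL_def)
    show "x \<otimes>\<^bsub>?D\<^esub> y \<in> carrier ?D" if "x \<in> carrier ?D" "y \<in> carrier ?D" for x y
      using lpos by (cases x, cases y) (simp add: mD cD)
    show "\<psi> (x \<otimes>\<^bsub>?D\<^esub> y) = \<psi> x \<otimes>\<^bsub>AutL \<sigma> a\<^esub> \<psi> y" for x y
    proof -
      obtain i e j f where xy: "x = (i, e)" "y = (j, f)" by (cases x, cases y)
      show ?thesis
      proof (cases e; cases f)
        assume ef: "\<not> e" "\<not> f"
        have "\<psi> x \<otimes>\<^bsub>AutL \<sigma> a\<^esub> \<psi> y = restrict (Emap (C.hp i) \<circ> Emap (C.hp j)) LC"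
          unfolding \<psi>_def using ef xy by (simp add: AutL_mult[OF Emap_LC[OF C.hp_nz]])
        then show ?thesis using ef xy
          by (simp add: \<psi>_def mD Emap_comp hpm hpm2 C.hp_add mult.commute)
      next
        assume ef: "\<not> e" "f"
        have "\<psi> x \<otimes>\<^bsub>AutL \<sigma> a\<^esub> \<psi> y = restrict (Emap (C.hp i) \<circ> Tmap (m * C.hp j)) LC"
          unfolding \<psi>_def using ef xy by (simp add: AutL_mult[OF Tmap_LC[OF knz]])
        then show ?thesis using ef xy
          by (simp add: \<psi>_def mD ET_comp hpm hpm2 C.hp_add algebra_simps)
      next
        assume ef: "e" "\<not> f"
        have "\<psi> x \<otimes>\<^bsub>AutL \<sigma> a\<^esub> \<psi> y = restrict (Tmap (m * C.hp i) \<circ> Emap (C.hp j)) LC"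
          unfolding \<psi>_def using ef xy by (simp add: AutL_mult[OF Emap_LC[OF C.hp_nz]])
        moreover have "C.hp (i - j) = \<sigma> (C.hp j) * C.hp i"
          using C.hp_add[of i "- j"] by (simp add: shp mult.commute)
        ultimately show ?thesis using ef xy
          by (simp add: \<psi>_def mD TE_comp hpm hpm2 algebra_simps)
      next
        assume ef: "e" "f"
        have "\<psi> x \<otimes>\<^bsub>AutL \<sigma> a\<^esub> \<psi> y = restrict (Tmap (m * C.hp i) \<circ> Tmap (m * C.hp j)) LC"
          unfolding \<psi>_def using ef xy by (simp add: AutL_mult[OF Tmap_LC[OF knz]])
        moreover have "C.hp (i - j + int l) = \<sigma> (m * C.hp j) * (m * C.hp i)"
        proof -
          have "C.hp (i - j + int l) = C.hp i * C.hp (- j) * C.hp (int l)"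
            using C.hp_add[of "i + - j" "int l"] C.hp_add[of i "- j"] by simp
          also have "\<dots> = (m * \<sigma> m) * (C.hp i * C.hp (- j))" using hpl m by simp
          also have "\<dots> = \<sigma> (m * C.hp j) * (m * C.hp i)" by (simp add: smult shp algebra_simps)
          finally show ?thesis .
        qed
        ultimately show ?thesis using ef xy
          by (simp add: \<psi>_def mD TT_comp hpm hpm2)
      qed
    qed
    show "\<one>\<^bsub>?D\<^esub> \<in> carrier ?D" using lpos by (simp add: dicyclic_group_def)
    show "\<psi> \<one>\<^bsub>?D\<^esub> = \<one>\<^bsub>AutL \<sigma> a\<^esub>" by (simp add: \<psi>_def dicyclic_group_def C.hp_0 Emap_1 AutL_one)
    show "\<exists>y\<in>carrier ?D. x \<otimes>\<^bsub>?D\<^esub> y = \<one>\<^bsub>?D\<^esub> \<and> y \<otimes>\<^bsub>?D\<^esub> x = \<one>\<^bsub>?D\<^esub>" if "x \<in> carrier ?D" for x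
    proof -
      obtain i e where x: "x = (i, e)" by (cases x)
      have one: "\<one>\<^bsub>?D\<^esub> = (0, False)" by (simp add: dicyclic_group_def)
      show ?thesis
      proof (cases e)
        case False
        have "(i + (- i) mod ?N) mod ?N = 0" by (simp add: mod_add_right_eq)
        moreover have "((- i) mod ?N + i) mod ?N = 0" by (simp add: mod_add_left_eq)
        ultimately show ?thesis using False x lpos
          by (intro bexI[of _ "((- i) mod ?N, False)"]) (simp_all add: mD one cD)
      next
        case True
        have "i - (i + int l) mod ?N + int l = (i + int l) - (i + int l) mod ?N" by simp
        also have "\<dots> = ?N * ((i + int l) div ?N)" by (rule minus_mod_eq_mult_div)
        finally have e1: "(i - (i + int l) mod ?N + int l) mod ?N = 0" by simp
        have s1: "(i + int l) mod ?N - i + int l = (i + int l) mod ?N + (int l - i)" by simp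
        have s2: "((i + int l) mod ?N + (int l - i)) mod ?N = ((i + int l) + (int l - i)) mod ?N"
          by (rule mod_add_left_eq)
        have s3: "(i + int l) + (int l - i) = ?N" by simp
        have e2: "((i + int l) mod ?N - i + int l) mod ?N = 0"
          by (simp only: s1 s2 s3 mod_self)
        show ?thesis using True x lpos e1 e2
          by (intro bexI[of _ "((i + int l) mod ?N, True)"]) (simp_all add: mD one cD)
      qed
    qed
    show "inj_on \<psi> (carrier ?D)"
    proof
      fix x y assume xy: "x \<in> carrier ?D" "y \<in> carrier ?D" "\<psi> x = \<psi> y"
      obtain i e j f where xy': "x = (i, e)" "y = (j, f)" by (cases x, cases y)
      have dLC: "(d, 0) \<in> LC" "(0::'k, 1::'k) \<in> LC" using d_nz by (auto simp: loop_carrier_def)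
      have dd: "d \<noteq> - d"
      proof
        assume "d = - d"
        then have "2 * d = 0" by (metis mult_2 add.right_inverse)
        then show False using chr d_nz by simp
      qed
      have "\<psi> x (d, 0) = \<psi> y (d, 0)" using xy by simp
      then have ef: "e = f" using dLC dd xy' by (cases e; cases f) (auto simp: \<psi>_def sd)
      have "\<psi> x (0, 1) = \<psi> y (0, 1)" using xy by simp
      then have "C.hp i = C.hp j" using dLC ef xy' m by (cases e) (auto simp: \<psi>_def)
      then have "i = j" using C.hp_inj xy xy' cD n2 by auto
      then show "x = y" using ef xy' by simp
    qed
  qed
  moreover have "\<forall>\<phi>\<in>\<psi> ` carrier ?D. extends_to_alg_aut \<sigma> a \<phi>" using ext by blast
  ultimately show ?thesis unfolding l_def by blast
qed

end

theorem mainTheorem6: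
  fixes \<sigma> :: "'k::{field,finite} \<Rightarrow> 'k" and d a :: 'k and q :: nat
  assumes sigma_add: "\<And>x y. \<sigma> (x + y) = \<sigma> x + \<sigma> y"
    and sigma_mult: "\<And>x y. \<sigma> (x * y) = \<sigma> x * \<sigma> y"
    and sigma_inv: "\<And>x. \<sigma> (\<sigma> x) = x"
    and sigma_nontriv: "\<sigma> \<noteq> id"
    and q_def: "q = card {x. \<sigma> x = x}"
    and char: "(2::'k) \<noteq> 0"
    and d_gen: "\<sigma> d \<noteq> d"
    and d_sq: "\<sigma> (d ^ 2) = d ^ 2"
    and a_notin: "\<sigma> a \<noteq> a"
  shows "((\<forall>l. \<sigma> l = l \<and> l \<noteq> 0 \<longrightarrow> a \<noteq> l * d) \<longrightarrow>
           (\<exists>H. subgroup H (AutL \<sigma> a) \<and>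
                (AutL \<sigma> a)\<lparr>carrier := H\<rparr> \<cong> integer_mod_group (q + 1) \<and>
                (\<forall>\<phi>\<in>H. inner_aut \<sigma> a \<phi> \<and> extends_to_alg_aut \<sigma> a \<phi>)))
       \<and> ((\<exists>l. \<sigma> l = l \<and> l \<noteq> 0 \<and> a = l * d) \<longrightarrow>
           (\<exists>H. subgroup H (AutL \<sigma> a) \<and>
                (AutL \<sigma> a)\<lparr>carrier := H\<rparr> \<cong> dicyclic_group ((q + 1) div 2) \<and>
                (\<forall>\<phi>\<in>H. extends_to_alg_aut \<sigma> a \<phi>)))"
proof -
  interpret N: nqa \<sigma> d a
    by unfold_locales (fact sigma_add sigma_mult sigma_inv char d_gen d_sq a_notin)+
  have q: "q = N.qq" by (simp add: q_def N.qq_def N.FF_def)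
  show ?thesis
    using N.part1 N.part2 unfolding q by blast
qed

end
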